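(* Let $G$ and $H$ be graphs with no isolated vertices. Then $$\gamma_{oir2}(G\Box H)\leq \alpha(G)\beta(H)+\beta(G)|V(H)|-\min\{\beta(G),\beta(H)\}.$$
   Context: All graphs are finite and simple. $\alpha(F)$ denotes the independence number of a graph $F$ and $\beta(F)$ its vertex cover number, so $\alpha(F)+\beta(F)=|V(F)|$. For a graph $G$, a function $f:V(G)\to\mathcal{P}(\{1,2\})$ is an outer-independent 2-rainbow dominating function (OI2RD function) if every vertex $v$ with $f(v)=\emptyset$ satisfies $\bigcup_{u\in N(v)}f(u)=\{1,2\}$ and the set $\{v: f(v)=\emptyset\}$ is independent. The weight of $f$ is $\sum_{v}|f(v)|$ and $\gamma_{oir2}(G)$ is the minimum weight of an OI2RD function of $G$. The Cartesian product $G\Box H$ has vertex set $V(G)\times V(H)$, with $(x,y)(x',y')$ an edge iff either $x=x'$ and $yy'\in E(H)$, or $y=y'$ and $xx'\in E(G)$. *)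

theory Defs
  imports Main
begin

definition simple_graph :: "'a set \<Rightarrow> ('a \<Rightarrow> 'a \<Rightarrow> bool) \<Rightarrow> bool" where
  "simple_graph V E \<longleftrightarrow> finite V \<and> (\<forall>x y. E x y \<longrightarrow> x \<in> V \<and> y \<in> V)
     \<and> (\<forall>x y. E x y \<longrightarrow> E y x) \<and> (\<forall>x. \<not> E x x)"

definition no_isolated :: "'a set \<Rightarrow> ('a \<Rightarrow> 'a \<Rightarrow> bool) \<Rightarrow> bool" where
  "no_isolated V E \<longleftrightarrow> (\<forall>v\<in>V. \<exists>u. E v u)"

definition nbhd :: "('a \<Rightarrow> 'a \<Rightarrow> bool) \<Rightarrow> 'a \<Rightarrow> 'a set" where
  "nbhd E v = {u. E v u}"

definition indep_set :: "'a set \<Rightarrow> ('a \<Rightarrow> 'a \<Rightarrow> bool) \<Rightarrow> 'a set \<Rightarrow> bool" where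
  "indep_set V E S \<longleftrightarrow> S \<subseteq> V \<and> (\<forall>x\<in>S. \<forall>y\<in>S. \<not> E x y)"

definition vertex_cover :: "'a set \<Rightarrow> ('a \<Rightarrow> 'a \<Rightarrow> bool) \<Rightarrow> 'a set \<Rightarrow> bool" where
  "vertex_cover V E C \<longleftrightarrow> C \<subseteq> V \<and> (\<forall>x y. E x y \<longrightarrow> x \<in> C \<or> y \<in> C)"

definition indep_num :: "'a set \<Rightarrow> ('a \<Rightarrow> 'a \<Rightarrow> bool) \<Rightarrow> nat" where
  "indep_num V E = Max {card S | S. indep_set V E S}"

definition vc_num :: "'a set \<Rightarrow> ('a \<Rightarrow> 'a \<Rightarrow> bool) \<Rightarrow> nat" where
  "vc_num V E = Min {card C | C. vertex_cover V E C}"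

text \<open>Outer-independent 2-rainbow dominating function (values on V matter only).\<close>
definition oi2rd :: "'a set \<Rightarrow> ('a \<Rightarrow> 'a \<Rightarrow> bool) \<Rightarrow> ('a \<Rightarrow> nat set) \<Rightarrow> bool" where
  "oi2rd V E f \<longleftrightarrow> (\<forall>v\<in>V. f v \<subseteq> {1, 2})
     \<and> (\<forall>v\<in>V. f v = {} \<longrightarrow> (\<Union>u\<in>nbhd E v. f u) = {1, 2})
     \<and> indep_set V E {v\<in>V. f v = {}}"

definition weight :: "'a set \<Rightarrow> ('a \<Rightarrow> nat set) \<Rightarrow> nat" where
  "weight V f = (\<Sum>v\<in>V. card (f v))"

definition gamma_oir2 :: "'a set \<Rightarrow> ('a \<Rightarrow> 'a \<Rightarrow> bool) \<Rightarrow> nat" where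
  "gamma_oir2 V E = Min {weight V f | f. oi2rd V E f}"

text \<open>Cartesian product of graphs: vertex set V_G \<times> V_H and this adjacency.\<close>
definition box_edge :: "('a \<Rightarrow> 'a \<Rightarrow> bool) \<Rightarrow> ('b \<Rightarrow> 'b \<Rightarrow> bool) \<Rightarrow> 'a \<times> 'b \<Rightarrow> 'a \<times> 'b \<Rightarrow> bool" where
  "box_edge EG EH p q \<longleftrightarrow> (fst p = fst q \<and> EH (snd p) (snd q)) \<or> (snd p = snd q \<and> EG (fst p) (fst q))"

end

theory Submission
  imports Defs
begin

lemma min_cover_exists:
  assumes "simple_graph V E"
  shows "\<exists>C. vertex_cover V E C \<and> card C = vc_num V E"
proof -
  have fin: "finite V" using assms by (simp add: simple_graph_def)
  let ?A = "{card C | C. vertex_cover V E C}"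
  have "V \<in> {C. vertex_cover V E C}" using assms by (auto simp: vertex_cover_def simple_graph_def)
  hence ne: "?A \<noteq> {}" by blast
  have "?A \<subseteq> {0..card V}" using fin by (auto simp: vertex_cover_def intro: card_mono)
  hence "finite ?A" using finite_subset by blast
  from Min_in[OF this ne] show ?thesis unfolding vc_num_def by auto
qed

lemma vc_le:
  assumes "simple_graph V E" "vertex_cover V E C"
  shows "vc_num V E \<le> card C"
proof -
  have fin: "finite V" using assms by (simp add: simple_graph_def)
  let ?A = "{card C | C. vertex_cover V E C}"
  have "?A \<subseteq> {0..card V}" using fin by (auto simp: vertex_cover_def intro: card_mono)
  hence "finite ?A" using finite_subset by blast
  thus ?thesis unfolding vc_num_def using assms(2) by (auto intro: Min_le)
qed

lemma cover_min_nbr: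
  assumes "simple_graph V E" "vertex_cover V E C" "card C = vc_num V E" "c \<in> C"
  shows "\<exists>u. E c u \<and> u \<notin> C"
proof (rule ccontr)
  assume "\<not> ?thesis"
  hence "\<forall>u. E c u \<longrightarrow> u \<in> C" by blast
  hence "vertex_cover V E (C - {c})" using assms(1,2)
    unfolding vertex_cover_def simple_graph_def by blast
  from vc_le[OF assms(1) this] have "vc_num V E \<le> card (C - {c})" .
  moreover have "finite C" using assms(1,2) unfolding vertex_cover_def simple_graph_def
    using finite_subset by blast
  ultimately show False using assms(3,4)
    by (metis card_Diff1_less_iff not_le)
qed

lemma indep_le:
  assumes "simple_graph V E" "indep_set V E S"
  shows "card S \<le> indep_num V E"
proof -
  have fin: "finite V" using assms by (simp add: simple_graph_def)
  let ?A = "{card S | S. indep_set V E S}"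
  have "?A \<subseteq> {0..card V}" using fin by (auto simp: indep_set_def intro: card_mono)
  hence "finite ?A" using finite_subset by blast
  thus ?thesis unfolding indep_num_def using assms(2) by (auto intro: Max_ge)
qed

lemma gamma_le:
  assumes "finite V" "oi2rd V E f"
  shows "gamma_oir2 V E \<le> weight V f"
proof -
  let ?A = "{weight V f | f. oi2rd V E f}"
  have "\<And>g. oi2rd V E g \<Longrightarrow> weight V g \<le> card V * 2"
  proof -
    fix g assume "oi2rd V E g"
    hence "\<forall>v\<in>V. card (g v) \<le> 2"
    proof (intro ballI)
      fix v assume "oi2rd V E g" "v \<in> V"
      hence "g v \<subseteq> {1,2::nat}" unfolding oi2rd_def by blast
      hence "card (g v) \<le> card {1,2::nat}" by (intro card_mono) auto
      thus "card (g v) \<le> 2" by simp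
    qed
    thus "weight V g \<le> card V * 2" unfolding weight_def
      using sum_bounded_above[of V "\<lambda>v. card (g v)" 2] by simp
  qed
  hence "?A \<subseteq> {0..card V * 2}" by auto
  hence "finite ?A" using finite_subset by blast
  thus ?thesis unfolding gamma_oir2_def using assms(2) by (auto intro: Min_le)
qed



lemma matching_exists:
  assumes "finite A" "finite B"
  shows "\<exists>D. D \<subseteq> A \<times> B \<and> card D = min (card A) (card B)
     \<and> (\<forall>a b b'. (a,b) \<in> D \<longrightarrow> (a,b') \<in> D \<longrightarrow> b = b')
     \<and> (\<forall>a a' b. (a,b) \<in> D \<longrightarrow> (a',b) \<in> D \<longrightarrow> a = a')"
proof -
  obtain xs where xs: "set xs = A" "distinct xs" using finite_distinct_list[OF assms(1)] by blast
  obtain ys where ys: "set ys = B" "distinct ys" using finite_distinct_list[OF assms(2)] by blast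
  let ?D = "set (zip xs ys)"
  have "?D \<subseteq> A \<times> B" using xs ys by (auto dest: set_zip_leftD set_zip_rightD)
  moreover have "card ?D = min (card A) (card B)"
    proof -
    have "card ?D = length (zip xs ys)" by (rule distinct_card[OF distinct_zipI1[OF xs(2)]])
    thus ?thesis using xs ys by (simp add: distinct_card[symmetric])
  qed
  moreover have "\<forall>a b b'. (a,b) \<in> ?D \<longrightarrow> (a,b') \<in> ?D \<longrightarrow> b = b'"
    using xs ys by (auto simp: set_zip nth_eq_iff_index_eq)
  moreover have "\<forall>a a' b. (a,b) \<in> ?D \<longrightarrow> (a',b) \<in> ?D \<longrightarrow> a = a'"
    using xs ys by (auto simp: set_zip nth_eq_iff_index_eq)
  ultimately show ?thesis by blast
qed

theorem theorem3:
  fixes VG :: "'a set" and EG :: "'a \<Rightarrow> 'a \<Rightarrow> bool"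
    and VH :: "'b set" and EH :: "'b \<Rightarrow> 'b \<Rightarrow> bool"
  assumes "simple_graph VG EG" and "simple_graph VH EH"
    and "no_isolated VG EG" and "no_isolated VH EH"
  shows "int (gamma_oir2 (VG \<times> VH) (box_edge EG EH))
    \<le> int (indep_num VG EG) * int (vc_num VH EH) + int (vc_num VG EG) * int (card VH)
       - int (min (vc_num VG EG) (vc_num VH EH))"
proof -
  note gG = assms(1)[unfolded simple_graph_def] and gH = assms(2)[unfolded simple_graph_def]
  obtain CG where CG: "vertex_cover VG EG CG" "card CG = vc_num VG EG"
    using min_cover_exists[OF assms(1)] by blast
  obtain CH where CH: "vertex_cover VH EH CH" "card CH = vc_num VH EH"
    using min_cover_exists[OF assms(2)] by blast
  have CGs: "CG \<subseteq> VG" and CHs: "CH \<subseteq> VH" using CG CH by (auto simp: vertex_cover_def)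
  have finG: "finite VG" and finH: "finite VH" using gG gH by auto
  have fCG: "finite CG" and fCH: "finite CH" using CGs CHs finG finH finite_subset by auto
  let ?SG = "VG - CG"
  have indS: "indep_set VG EG ?SG" using CG(1) unfolding indep_set_def vertex_cover_def by blast
  have SGle: "card ?SG \<le> indep_num VG EG" by (rule indep_le[OF assms(1) indS])
  obtain D where D: "D \<subseteq> CG \<times> CH" "card D = min (card CG) (card CH)"
     "\<And>a b b'. (a,b) \<in> D \<Longrightarrow> (a,b') \<in> D \<Longrightarrow> b = b'"
     "\<And>a a' b. (a,b) \<in> D \<Longrightarrow> (a',b) \<in> D \<Longrightarrow> a = a'"
    using matching_exists[OF fCG fCH] by blast
  define f :: "'a \<times> 'b \<Rightarrow> nat set" where
    "f p = (if p \<in> D then {} else if fst p \<in> CG then {1} else if snd p \<in> CH then {2} else {})" for p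
  let ?V = "VG \<times> VH" and ?E = "box_edge EG EH"
  have fsub: "\<And>p. f p \<subseteq> {1,2}" unfolding f_def by auto
  have nb: "\<And>p q. ?E p q \<Longrightarrow> q \<in> nbhd ?E p" unfolding nbhd_def by simp
  have dom: "(\<Union>u\<in>nbhd ?E v. f u) = {1, 2}" if v: "v \<in> ?V" "f v = {}" for v
  proof -
    obtain g h where gh: "v = (g,h)" by (cases v)
    have "1 \<in> (\<Union>u\<in>nbhd ?E v. f u) \<and> 2 \<in> (\<Union>u\<in>nbhd ?E v. f u)"
    proof (cases "v \<in> D")
      case True
      hence g: "g \<in> CG" and h: "h \<in> CH" using D(1) gh by auto
      obtain g' where g': "EG g g'" "g' \<notin> CG" using cover_min_nbr[OF assms(1) CG g] by blast
      obtain h' where h': "EH h h'" using assms(4) h CHs unfolding no_isolated_def by blast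
      have "(g,h') \<notin> D"
      proof
        assume "(g,h') \<in> D"
        hence "h = h'" using D(3) True gh by blast
        thus False using h' gH by auto
      qed
      hence "f (g,h') = {1}" using g unfolding f_def by simp
      moreover have "?E v (g,h')" using gh h' by (simp add: box_edge_def)
      moreover have "f (g',h) = {2}" using g' h D(1) unfolding f_def by auto
      moreover have "?E v (g',h)" using gh g' by (simp add: box_edge_def)
      ultimately show ?thesis using nb by blast
    next
      case False
      hence g: "g \<notin> CG" and h: "h \<notin> CH" using v gh unfolding f_def by (auto split: if_splits)
      obtain g' where g': "EG g g'" using assms(3) v gh unfolding no_isolated_def by auto
      obtain h' where h': "EH h h'" using assms(4) v gh unfolding no_isolated_def by auto
      have g'C: "g' \<in> CG" using CG(1) g g' unfolding vertex_cover_def by blast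
      have h'C: "h' \<in> CH" using CH(1) h h' unfolding vertex_cover_def by blast
      have "f (g',h) = {1}" using g'C h D(1) unfolding f_def by auto
      moreover have "?E v (g',h)" using gh g' by (simp add: box_edge_def)
      moreover have "f (g,h') = {2}" using g h'C D(1) unfolding f_def by auto
      moreover have "?E v (g,h')" using gh h' by (simp add: box_edge_def)
      ultimately show ?thesis using nb by blast
    qed
    moreover have "(\<Union>u\<in>nbhd ?E v. f u) \<subseteq> {1,2}" using fsub by blast
    ultimately show ?thesis by auto
  qed
  have ind: "indep_set ?V ?E {v\<in>?V. f v = {}}"
    unfolding indep_set_def
  proof (intro conjI ballI)
    show "{v\<in>?V. f v = {}} \<subseteq> ?V" by blast
  next
    fix p q assume p: "p \<in> {v\<in>?V. f v = {}}" and q: "q \<in> {v\<in>?V. f v = {}}"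
    obtain g h where gh: "p = (g,h)" by (cases p)
    obtain g' h' where gh': "q = (g',h')" by (cases q)
    have pc: "(g,h) \<in> D \<or> (g \<notin> CG \<and> h \<notin> CH)" using p gh unfolding f_def by (auto split: if_splits)
    have qc: "(g',h') \<in> D \<or> (g' \<notin> CG \<and> h' \<notin> CH)" using q gh' unfolding f_def by (auto split: if_splits)
    show "\<not> ?E p q"
    proof
      assume e: "?E p q"
      hence "(g = g' \<and> EH h h') \<or> (h = h' \<and> EG g g')" using gh gh' by (simp add: box_edge_def)
      thus False
      proof
        assume a: "g = g' \<and> EH h h'"
        hence "h \<noteq> h'" using gH by auto
        show False using pc qc a D(1) D(3) \<open>h \<noteq> h'\<close> CH(1)
          unfolding vertex_cover_def by auto
      next
        assume a: "h = h' \<and> EG g g'"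
        hence "g \<noteq> g'" using gG by auto
        show False using pc qc a D(1) D(4) \<open>g \<noteq> g'\<close> CG(1)
          unfolding vertex_cover_def by auto
      qed
    qed
  qed
  have oi: "oi2rd ?V ?E f" unfolding oi2rd_def using fsub dom ind by blast
  have gle: "gamma_oir2 ?V ?E \<le> weight ?V f" using gamma_le[OF _ oi] finG finH by simp
  let ?P = "(CG \<times> VH - D) \<union> (?SG \<times> CH)"
  have cardf: "card (f p) = (if p \<in> ?P then 1 else 0)" if "p \<in> ?V" for p
    using that D(1) unfolding f_def by (cases p) auto
  have "weight ?V f = (\<Sum>p\<in>?V. if p \<in> ?P then 1 else 0)"
    unfolding weight_def using cardf by (intro sum.cong) auto
  also have "\<dots> = card (?V \<inter> ?P)" by (simp add: sum.If_cases finG finH, intro arg_cong[where f=card], blast)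
  also have "?V \<inter> ?P = ?P" using CGs CHs by blast
  also have "card ?P = card (CG \<times> VH - D) + card (?SG \<times> CH)"
    by (rule card_Un_disjoint) (use finG finH fCG fCH in auto)
  also have "card (CG \<times> VH - D) = card CG * card VH - card D"
    using D(1) CHs by (subst card_Diff_subset) (auto simp: card_cartesian_product finH fCG
        intro: finite_subset[of D "CG \<times> CH"] fCG fCH)
  finally have w: "weight ?V f = card CG * card VH - card D + card ?SG * card CH"
    by (simp add: card_cartesian_product)
  have Dle: "card D \<le> card CG * card VH"
    using card_mono[of "CG \<times> VH" D] D(1) CHs fCG finH by (auto simp: card_cartesian_product)
  have "int (gamma_oir2 ?V ?E) \<le> int (card CG * card VH) - int (card D) + int (card ?SG) * int (card CH)"
  proof -
    have "weight ?V f + card D = card CG * card VH + card ?SG * card CH" using w Dle by linarith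
    hence "int (weight ?V f) + int (card D) = int (card CG * card VH) + int (card ?SG) * int (card CH)"
      by (metis of_nat_add of_nat_mult)
    moreover have "int (gamma_oir2 ?V ?E) \<le> int (weight ?V f)" using gle by simp
    ultimately show ?thesis by linarith
  qed
  also have "\<dots> \<le> int (indep_num VG EG) * int (card CH) + int (card CG) * int (card VH) - int (card D)"
    using SGle by (simp add: mult_right_mono)
  finally show ?thesis using CG(2) CH(2) D(2) by simp
qed

end
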